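(* Let $\mathcal{P}=(P_1,\ldots,P_r)$ be an $r$-tuple of pairwise disjoint finite subsets of $\mathbb{R}^d$. Then: (i) $0\in\operatorname{aff}(\Phi(\mathcal{P}))$ if and only if $\bigcap_{i=1}^r\operatorname{aff}(P_i)\neq\emptyset$ ($\mathcal{P}$ has an affine Tverberg point); (ii) the set $\Phi(\mathcal{P})$ is affinely dependent if and only if at least one of the sets $P_i$ is affinely dependent or $\bigcap_{i=1}^r\operatorname{linaff}(P_i)\neq\{0\}$ ($\mathcal{P}$ has a Tverberg direction).
   Context: Let $N=(d+1)(r-1)$, $w_1,\ldots,w_r\in\mathbb{R}^{r-1}$ the vertices of a regular $(r-1)$-simplex centered at the origin, $x^+=(x,1)\in\mathbb{R}^{d+1}$ for $x\in\mathbb{R}^d$, and $u\otimes v=(u_1v_1,\ldots,u_1v_n,u_2v_1,\ldots,u_mv_n)$ the tensor product. The $i$th clone of $x$ is $\varphi_i(x)=x^+\otimes w_i\in\mathbb{R}^N$, and $\Phi(\mathcal{P})=\bigcup_{i=1}^r\{\varphi_i(p):p\in P_i\}$. $\operatorname{aff}(X)$ is the affine hull of $X$; $\operatorname{linaff}(X)$ is its translate through the origin, i.e., the set of all linear combinations $\sum\beta_ix_i$ with $x_i\in X$ and $\sum\beta_i=0$. *)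

theory Defs
  imports "HOL-Analysis.Analysis"
begin

text \<open>x^+ = (x,1) in R^{d+1}; the extra coordinate is indexed by None.\<close>
definition xplus :: "real^'d \<Rightarrow> real^('d option)" where
  "xplus x = (\<chi> j. case j of None \<Rightarrow> 1 | Some i \<Rightarrow> x $ i)"

definition tensor :: "real^'a \<Rightarrow> real^'b \<Rightarrow> real^('a \<times> 'b)" where
  "tensor u v = (\<chi> p. u $ fst p * v $ snd p)"

definition clone :: "(nat \<Rightarrow> real^'k) \<Rightarrow> nat \<Rightarrow> real^'d \<Rightarrow> real^(('d option) \<times> 'k)" where
  "clone w i x = tensor (xplus x) (w i)"

definition Phi :: "(nat \<Rightarrow> real^'k) \<Rightarrow> nat \<Rightarrow> (nat \<Rightarrow> (real^'d) set) \<Rightarrow> (real^(('d option) \<times> 'k)) set" where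
  "Phi w r P = (\<Union>i<r. clone w i ` P i)"

definition linaff :: "'a::real_vector set \<Rightarrow> 'a set" where
  "linaff X = {y. \<exists>S \<beta>. finite S \<and> S \<subseteq> X \<and> sum \<beta> S = 0 \<and> y = (\<Sum>x\<in>S. \<beta> x *\<^sub>R x)}"

definition regular_simplex_centered :: "nat \<Rightarrow> (nat \<Rightarrow> 'a::euclidean_space) \<Rightarrow> bool" where
  "regular_simplex_centered r w \<longleftrightarrow>
     inj_on w {..<r} \<and> \<not> affine_dependent (w ` {..<r}) \<and>
     (\<exists>c>0. \<forall>i<r. \<forall>j<r. i \<noteq> j \<longrightarrow> dist (w i) (w j) = c) \<and>
     (\<Sum>i<r. w i) = 0"

end

theory Submission imports Defs begin

lemma reidx:
  assumes "finite I" "inj_on g I"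
  shows "sum u (g ` I) = sum (u \<circ> g) I"
    "(\<Sum>v\<in>g ` I. u v *\<^sub>R v) = (\<Sum>x\<in>I. (u \<circ> g) x *\<^sub>R g x)"
  using assms by (simp_all add: sum.reindex)

lemma G_hull_iff:
  fixes g :: "'i \<Rightarrow> 'a::real_vector"
  assumes "finite I" "inj_on g I"
  shows "y \<in> affine hull (g ` I) \<longleftrightarrow> (\<exists>c. sum c I = 1 \<and> (\<Sum>x\<in>I. c x *\<^sub>R g x) = y)"
proof
  assume "y \<in> affine hull (g ` I)"
  then obtain u where "sum u (g`I) = 1" "(\<Sum>v\<in>g ` I. u v *\<^sub>R v) = y"
    using affine_hull_finite[of "g ` I"] assms by auto
  then show "\<exists>c. sum c I = 1 \<and> (\<Sum>x\<in>I. c x *\<^sub>R g x) = y"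
    using reidx[OF assms, of u] by (intro exI[of _ "u \<circ> g"]) auto
next
  assume "\<exists>c. sum c I = 1 \<and> (\<Sum>x\<in>I. c x *\<^sub>R g x) = y"
  then obtain c where c: "sum c I = 1" "(\<Sum>x\<in>I. c x *\<^sub>R g x) = y" by blast
  define u where "u = c \<circ> the_inv_into I g"
  have e: "\<And>x. x \<in> I \<Longrightarrow> (u \<circ> g) x = c x" using assms(2) by (simp add: u_def the_inv_into_f_f)
  have "sum u (g`I) = 1" "(\<Sum>v\<in>g ` I. u v *\<^sub>R v) = y"
    using reidx[OF assms, of u] c e by (auto intro: sum.cong simp del: comp_apply)
  then show "y \<in> affine hull (g ` I)"
    using affine_hull_finite[of "g ` I"] assms by auto
qed

lemma G_dep_iff:
  fixes g :: "'i \<Rightarrow> 'a::real_vector"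
  assumes "finite I" "inj_on g I"
  shows "affine_dependent (g ` I) \<longleftrightarrow> (\<exists>c. sum c I = 0 \<and> (\<exists>x\<in>I. c x \<noteq> 0) \<and> (\<Sum>x\<in>I. c x *\<^sub>R g x) = 0)"
proof
  assume "affine_dependent (g ` I)"
  then obtain u where "sum u (g`I) = 0" "\<exists>v\<in>g`I. u v \<noteq> 0" "(\<Sum>v\<in>g ` I. u v *\<^sub>R v) = 0"
    using affine_dependent_explicit_finite[of "g ` I"] assms by auto
  then show "\<exists>c. sum c I = 0 \<and> (\<exists>x\<in>I. c x \<noteq> 0) \<and> (\<Sum>x\<in>I. c x *\<^sub>R g x) = 0"
    using reidx[OF assms, of u] by (intro exI[of _ "u \<circ> g"]) auto
next
  assume "\<exists>c. sum c I = 0 \<and> (\<exists>x\<in>I. c x \<noteq> 0) \<and> (\<Sum>x\<in>I. c x *\<^sub>R g x) = 0"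
  then obtain c where c: "sum c I = 0" "\<exists>x\<in>I. c x \<noteq> 0" "(\<Sum>x\<in>I. c x *\<^sub>R g x) = 0" by blast
  define u where "u = c \<circ> the_inv_into I g"
  have e: "\<And>x. x \<in> I \<Longrightarrow> (u \<circ> g) x = c x" using assms(2) by (simp add: u_def the_inv_into_f_f)
  have "sum u (g`I) = 0" "(\<Sum>v\<in>g ` I. u v *\<^sub>R v) = 0"
    using reidx[OF assms, of u] c e by (auto intro: sum.cong simp del: comp_apply)
  moreover have "\<exists>v\<in>g`I. u v \<noteq> 0" using c(2) e by force
  ultimately show "affine_dependent (g ` I)"
    using affine_dependent_explicit_finite[of "g ` I"] assms by auto
qed


lemma xplus_None[simp]: "xplus x $ None = 1" and xplus_Some[simp]: "xplus x $ Some a = x $ a"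
  by (simp_all add: xplus_def)

lemma clone_comp: "clone w i p $ (j,k) = xplus p $ j * w i $ k"
  by (simp add: clone_def tensor_def)

lemma simplex_lin:
  fixes w :: "nat \<Rightarrow> real^'k"
  assumes "regular_simplex_centered r w" "r > 0" "(\<Sum>i<r. l i *\<^sub>R w i) = 0" "i < r"
  shows "l i = (\<Sum>j<r. l j) / r"
proof (rule ccontr)
  assume ne: "l i \<noteq> (\<Sum>j<r. l j) / r"
  define m where "m = (\<Sum>j<r. l j) / r"
  have inj: "inj_on w {..<r}" and ind: "\<not> affine_dependent (w ` {..<r})" and ws: "(\<Sum>i<r. w i) = 0"
    using assms(1) by (auto simp: regular_simplex_centered_def)
  have "sum (\<lambda>j. l j - m) {..<r} = 0" using assms(2) by (simp add: sum_subtractf m_def)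
  moreover have "(\<Sum>j<r. (l j - m) *\<^sub>R w j) = 0"
    using assms(3) ws by (simp add: scaleR_diff_left sum_subtractf flip: scaleR_right.sum)
  moreover have "\<exists>x\<in>{..<r}. l x - m \<noteq> 0" using ne assms(4) m_def by auto
  ultimately have "affine_dependent (w ` {..<r})"
    using G_dep_iff[OF _ inj] by blast
  with ind show False by simp
qed

lemma simplex_nonzero:
  fixes w :: "nat \<Rightarrow> real^'k"
  assumes "regular_simplex_centered r w" "r \<ge> 2" "i < r"
  shows "w i \<noteq> 0"
proof
  assume w0: "w i = 0"
  have inj: "inj_on w {..<r}" and ind: "\<not> affine_dependent (w ` {..<r})" and ws: "(\<Sum>i<r. w i) = 0"
    using assms(1) by (auto simp: regular_simplex_centered_def)
  define u where "u j = 1 - (if j = i then real r else 0)" for j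
  have "sum u {..<r} = 0" using assms(3) by (simp add: u_def sum_subtractf)
  moreover have "(\<Sum>j<r. u j *\<^sub>R w j) = 0"
  proof -
    have "(\<Sum>j<r. u j *\<^sub>R w j) = (\<Sum>j<r. w j)" by (rule sum.cong) (auto simp: u_def w0)
    then show ?thesis using ws by simp
  qed
  moreover have "\<exists>x\<in>{..<r}. u x \<noteq> 0" using assms by (intro bexI[of _ i]) (auto simp: u_def)
  ultimately have "affine_dependent (w ` {..<r})"
    using G_dep_iff[OF _ inj] by blast
  with ind show False by simp
qed


theorem lemma4:
  fixes r :: nat
    and w :: "nat \<Rightarrow> real^'k"
    and P :: "nat \<Rightarrow> (real^'d) set"
  assumes "r = CARD('k) + 1"
    and "regular_simplex_centered r w"
    and "\<forall>i<r. finite (P i)"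
    and "\<forall>i<r. \<forall>j<r. i \<noteq> j \<longrightarrow> P i \<inter> P j = {}"
  shows "(0 \<in> affine hull (Phi w r P) \<longleftrightarrow> (\<Inter>i<r. affine hull (P i)) \<noteq> {})
       \<and> (affine_dependent (Phi w r P) \<longleftrightarrow>
            (\<exists>i<r. affine_dependent (P i)) \<or> (\<Inter>i<r. linaff (P i)) \<noteq> {0})"
proof -
  have r2: "r \<ge> 2" using assms(1) by simp
  hence r0: "r > 0" by simp
  have ws: "(\<Sum>i<r. w i) = 0" and injw: "inj_on w {..<r}"
    using assms(2) by (auto simp: regular_simplex_centered_def)
  define I where "I = Sigma {..<r} P"
  define g :: "nat \<times> (real^'d) \<Rightarrow> real^('d option \<times> 'k)" where "g = (\<lambda>(i,p). clone w i p)"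
  have finI: "finite I" using assms(3) by (auto simp: I_def)
  have PhiI: "Phi w r P = g ` I" by (auto simp: Phi_def I_def g_def)
  have injg: "inj_on g I"
  proof (rule inj_onI)
    fix x y assume xy: "x \<in> I" "y \<in> I" "g x = g y"
    obtain i p where x: "x = (i,p)" "i < r" "p \<in> P i" using xy(1) by (auto simp: I_def)
    obtain j q where y: "y = (j,q)" "j < r" "q \<in> P j" using xy(2) by (auto simp: I_def)
    have e: "clone w i p $ (a,k) = clone w j q $ (a,k)" for a k
      using xy(3) x y by (simp add: g_def)
    have "w i $ k = w j $ k" for k using e[of None k] by (simp add: clone_comp)
    hence "w i = w j" by (simp add: vec_eq_iff)
    hence ij: "i = j" using injw x y by (auto dest: inj_onD)
    obtain k where k: "w i $ k \<noteq> 0" using simplex_nonzero[OF assms(2) r2 x(2)] by (auto simp: vec_eq_iff)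
    have "p $ a = q $ a" for a using e[of "Some a" k] k ij by (simp add: clone_comp)
    hence "p = q" by (simp add: vec_eq_iff)
    with ij x y show "x = y" by simp
  qed
  have Sig: "(\<Sum>i<r. \<Sum>p\<in>P i. f i p) = (\<Sum>(i,p)\<in>I. f i p)" for f :: "nat \<Rightarrow> real^'d \<Rightarrow> real"
    unfolding I_def by (rule sum.Sigma) (use assms(3) in auto)
  define V where "V c i j = (\<Sum>p\<in>P i. c (i,p) * xplus p $ j)" for c :: "nat \<times> (real^'d) \<Rightarrow> real" and i j
  have comp: "(\<Sum>x\<in>I. c x *\<^sub>R g x) $ (j,k) = (\<Sum>i<r. V c i j * w i $ k)" for c j k
  proof -
    have "(\<Sum>x\<in>I. c x *\<^sub>R g x) $ (j,k) = (\<Sum>x\<in>I. c x * (g x $ (j,k)))" by simp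
    also have "\<dots> = (\<Sum>(i,p)\<in>I. c (i,p) * (xplus p $ j * w i $ k))"
      by (rule sum.cong) (auto simp: g_def clone_comp)
    also have "\<dots> = (\<Sum>i<r. \<Sum>p\<in>P i. c (i,p) * (xplus p $ j * w i $ k))"
      by (rule Sig[symmetric])
    also have "\<dots> = (\<Sum>i<r. V c i j * w i $ k)"
      by (simp add: V_def sum_distrib_right mult.assoc)
    finally show ?thesis .
  qed
  have E: "(\<Sum>x\<in>I. c x *\<^sub>R g x) = 0 \<longleftrightarrow> (\<forall>j. \<forall>i<r. V c i j = V c 0 j)" for c
  proof
    assume z: "(\<Sum>x\<in>I. c x *\<^sub>R g x) = 0"
    show "\<forall>j. \<forall>i<r. V c i j = V c 0 j"
    proof (intro allI impI)
      fix j i assume i: "i < r"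
      have "(\<Sum>i<r. V c i j *\<^sub>R w i) $ k = 0" for k
      proof -
        have "(\<Sum>i<r. V c i j *\<^sub>R w i) $ k = (\<Sum>i<r. V c i j * w i $ k)" by simp
        also have "\<dots> = (\<Sum>x\<in>I. c x *\<^sub>R g x) $ (j,k)" by (simp only: comp)
        also have "\<dots> = 0" by (simp only: z zero_index)
        finally show ?thesis .
      qed
      hence "(\<Sum>i<r. V c i j *\<^sub>R w i) = 0" by (simp add: vec_eq_iff)
      from simplex_lin[OF assms(2) r0 this, of i] simplex_lin[OF assms(2) r0 this, of 0] i r0
      show "V c i j = V c 0 j" by linarith
    qed
  next
    assume h: "\<forall>j. \<forall>i<r. V c i j = V c 0 j"
    have "(\<Sum>x\<in>I. c x *\<^sub>R g x) $ (j,k) = 0" for j k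
    proof -
      have "(\<Sum>i<r. V c i j * w i $ k) = (\<Sum>i<r. V c 0 j * w i $ k)"
      proof (rule sum.cong[OF refl])
        fix i assume "i \<in> {..<r}"
        then have "V c i j = V c 0 j" using h by (meson lessThan_iff)
        then show "V c i j * w i $ k = V c 0 j * w i $ k" by (rule arg_cong)
      qed
      also have "\<dots> = V c 0 j * (\<Sum>i<r. w i) $ k" by (simp add: sum_distrib_left)
      also have "\<dots> = 0" using ws by simp
      finally show ?thesis by (simp only: comp)
    qed
    then show "(\<Sum>x\<in>I. c x *\<^sub>R g x) = 0" by (auto simp: vec_eq_iff simp del: sum_component)
  qed
  have sumI: "sum c I = (\<Sum>i<r. V c i None)" for c
  proof -
    have "sum c I = (\<Sum>(i,p)\<in>I. c (i,p))" by (simp add: case_prod_beta')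
    then show ?thesis unfolding V_def using Sig by simp
  qed
  have VS: "V c i (Some a) = (\<Sum>p\<in>P i. c (i,p) *\<^sub>R p) $ a" for c i a
    by (simp add: V_def)
  have VN: "V c i None = (\<Sum>p\<in>P i. c (i,p))" for c i by (simp add: V_def)
  have hullI: "y \<in> affine hull (P i) \<longleftrightarrow> (\<exists>u. sum u (P i) = 1 \<and> (\<Sum>p\<in>P i. u p *\<^sub>R p) = y)" if "i < r" for i y
    using affine_hull_finite[of "P i"] assms(3) that by auto
  have depI: "affine_dependent (P i) \<longleftrightarrow> (\<exists>U. sum U (P i) = 0 \<and> (\<exists>v\<in>P i. U v \<noteq> 0) \<and> (\<Sum>p\<in>P i. U p *\<^sub>R p) = 0)" if "i < r" for i
    using affine_dependent_explicit_finite[of "P i"] assms(3) that by auto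
  have linI: "\<exists>\<beta>. sum \<beta> (P i) = 0 \<and> (\<Sum>p\<in>P i. \<beta> p *\<^sub>R p) = y" if iy: "i < r" "y \<in> linaff (P i)" for i y
  proof -
    obtain S \<beta> where S: "finite S" "S \<subseteq> P i" "sum \<beta> S = 0" "y = (\<Sum>x\<in>S. \<beta> x *\<^sub>R x)"
      using iy(2) by (auto simp: linaff_def)
    have fin: "finite (P i)" using assms(3) iy(1) by auto
    define \<beta>' where "\<beta>' x = (if x \<in> S then \<beta> x else 0)" for x
    have "sum \<beta>' (P i) = sum \<beta> (P i \<inter> S)" unfolding \<beta>'_def by (rule sum.inter_restrict[OF fin, symmetric])
    also have "P i \<inter> S = S" using S(2) by auto
    finally have 1: "sum \<beta>' (P i) = 0" using S(3) by simp
    have "(\<Sum>p\<in>P i. \<beta>' p *\<^sub>R p) = (\<Sum>p\<in>P i. if p \<in> S then \<beta> p *\<^sub>R p else 0)"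
      by (rule sum.cong) (auto simp: \<beta>'_def)
    also have "\<dots> = (\<Sum>p\<in>P i \<inter> S. \<beta> p *\<^sub>R p)" by (rule sum.inter_restrict[OF fin, symmetric])
    finally have 2: "(\<Sum>p\<in>P i. \<beta>' p *\<^sub>R p) = y" using S(4) \<open>P i \<inter> S = S\<close> by simp
    show ?thesis using 1 2 by blast
  qed
  have part1: "0 \<in> affine hull (Phi w r P) \<longleftrightarrow> (\<Inter>i<r. affine hull (P i)) \<noteq> {}"
  proof
    assume "0 \<in> affine hull (Phi w r P)"
    then obtain c where c: "sum c I = 1" "(\<Sum>x\<in>I. c x *\<^sub>R g x) = 0"
      using G_hull_iff[OF finI injg] PhiI by auto
    have h: "\<And>j i. i < r \<Longrightarrow> V c i j = V c 0 j" using E c(2) by blast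
    have "1 = (\<Sum>i<r. V c i None)" using sumI c(1) by simp
    also have "\<dots> = (\<Sum>i<r. V c 0 None)" by (rule sum.cong[OF refl]) (metis h lessThan_iff)
    finally have a: "V c 0 None * real r = 1" by (simp add: mult.commute)
    define x where "x = real r *\<^sub>R (\<Sum>p\<in>P 0. c (0,p) *\<^sub>R p)"
    have "x \<in> affine hull (P i)" if i: "i < r" for i
    proof -
      have eq: "(\<Sum>p\<in>P i. c (i,p) *\<^sub>R p) = (\<Sum>p\<in>P 0. c (0,p) *\<^sub>R p)"
        using h[OF i, of "Some _"] by (simp add: VS vec_eq_iff)
      have "sum (\<lambda>p. real r * c (i,p)) (P i) = 1"
        using a h[OF i, of None] by (simp add: VN sum_distrib_left[symmetric] mult.commute)
      moreover have "(\<Sum>p\<in>P i. (real r * c (i,p)) *\<^sub>R p) = x"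
      proof -
        have "(\<Sum>p\<in>P i. (real r * c (i,p)) *\<^sub>R p) = real r *\<^sub>R (\<Sum>p\<in>P i. c (i,p) *\<^sub>R p)"
          by (simp add: scaleR_right.sum)
        then show ?thesis using eq by (simp add: x_def)
      qed
      ultimately show ?thesis using hullI[OF i] by blast
    qed
    then show "(\<Inter>i<r. affine hull (P i)) \<noteq> {}" by blast
  next
    assume "(\<Inter>i<r. affine hull (P i)) \<noteq> {}"
    then obtain x where x: "\<And>i. i < r \<Longrightarrow> x \<in> affine hull (P i)" by blast
    have "\<forall>i. \<exists>u. i < r \<longrightarrow> sum u (P i) = 1 \<and> (\<Sum>p\<in>P i. u p *\<^sub>R p) = x"
      using x hullI by blast
    then obtain U where U: "\<And>i. i < r \<Longrightarrow> sum (U i) (P i) = 1 \<and> (\<Sum>p\<in>P i. U i p *\<^sub>R p) = x"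
      by metis
    define c where "c = (\<lambda>(i,p). U i p / real r)"
    have VNc: "V c i None = 1 / real r" if "i < r" for i
      using U[OF that] by (simp add: VN c_def sum_divide_distrib[symmetric])
    have VSc: "V c i (Some a) = (x /\<^sub>R real r) $ a" if "i < r" for i a
    proof -
      have "V c i (Some a) = (\<Sum>p\<in>P i. (U i p / real r) *\<^sub>R p) $ a" by (simp add: VS c_def)
      also have "(\<Sum>p\<in>P i. (U i p / real r) *\<^sub>R p) = (\<Sum>p\<in>P i. U i p *\<^sub>R p) /\<^sub>R real r"
        by (simp add: scaleR_right.sum divide_inverse_commute)
      finally show ?thesis using U[OF that] by simp
    qed
    have "V c i j = V c 0 j" if "i < r" for i j
      using that r0 by (cases j) (simp_all add: VNc VSc)
    then have "(\<Sum>x\<in>I. c x *\<^sub>R g x) = 0" using E by blast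
    moreover have "sum c I = 1" using sumI[of c] VNc r0 by simp
    ultimately show "0 \<in> affine hull (Phi w r P)"
      using G_hull_iff[OF finI injg] PhiI by auto
  qed
  have part2: "affine_dependent (Phi w r P) \<longleftrightarrow>
            (\<exists>i<r. affine_dependent (P i)) \<or> (\<Inter>i<r. linaff (P i)) \<noteq> {0}"
  proof
    assume "affine_dependent (Phi w r P)"
    then obtain c where c: "sum c I = 0" "\<exists>x\<in>I. c x \<noteq> 0" "(\<Sum>x\<in>I. c x *\<^sub>R g x) = 0"
      using G_dep_iff[OF finI injg] PhiI by auto
    have h: "\<And>j i. i < r \<Longrightarrow> V c i j = V c 0 j" using E c(3) by blast
    have "0 = (\<Sum>i<r. V c i None)" using sumI c(1) by simp
    also have "\<dots> = (\<Sum>i<r. V c 0 None)" by (rule sum.cong[OF refl]) (metis h lessThan_iff)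
    finally have a: "V c 0 None = 0" using r0 by simp
    define u where "u = (\<Sum>p\<in>P 0. c (0,p) *\<^sub>R p)"
    have eq: "(\<Sum>p\<in>P i. c (i,p) *\<^sub>R p) = u" if i: "i < r" for i
      using h[OF i, of "Some _"] by (simp add: VS vec_eq_iff u_def)
    have s0: "sum (\<lambda>p. c (i,p)) (P i) = 0" if i: "i < r" for i
      using h[OF i, of None] a by (simp add: VN)
    show "(\<exists>i<r. affine_dependent (P i)) \<or> (\<Inter>i<r. linaff (P i)) \<noteq> {0}"
    proof (cases "u = 0")
      case True
      obtain i0 p0 where ip: "i0 < r" "p0 \<in> P i0" "c (i0,p0) \<noteq> 0" using c(2) by (auto simp: I_def)
      have "affine_dependent (P i0)"
        using depI[OF ip(1)] s0[OF ip(1)] eq[OF ip(1)] True ip by blast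
      then show ?thesis using ip(1) by blast
    next
      case False
      have "u \<in> linaff (P i)" if i: "i < r" for i
        unfolding linaff_def using assms(3) i s0[OF i] eq[OF i]
        by (intro CollectI exI[of _ "P i"] exI[of _ "\<lambda>p. c (i,p)"]) auto
      then have "u \<in> (\<Inter>i<r. linaff (P i))" by blast
      then show ?thesis using False by blast
    qed
  next
    assume "(\<exists>i<r. affine_dependent (P i)) \<or> (\<Inter>i<r. linaff (P i)) \<noteq> {0}"
    then show "affine_dependent (Phi w r P)"
    proof
      assume "\<exists>i<r. affine_dependent (P i)"
      then obtain i0 where i0: "i0 < r" "affine_dependent (P i0)" by blast
      then obtain U v where U: "sum U (P i0) = 0" "v \<in> P i0" "U v \<noteq> 0" "(\<Sum>p\<in>P i0. U p *\<^sub>R p) = 0"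
        using depI by blast
      define c where "c = (\<lambda>(i,p). if i = i0 then U p else 0)"
      have V0: "V c i j = 0" if "i < r" for i j
      proof (cases "i = i0")
        case False then show ?thesis by (simp add: V_def c_def)
      next
        case True
        show ?thesis
        proof (cases j)
          case None then show ?thesis using True U(1) by (simp add: VN c_def)
        next
          case (Some a) then show ?thesis using True U(4) by (simp add: VS c_def)
        qed
      qed
      have "(\<Sum>x\<in>I. c x *\<^sub>R g x) = 0" using E V0 r0 by simp
      moreover have "sum c I = 0" using sumI[of c] V0 by simp
      moreover have "\<exists>x\<in>I. c x \<noteq> 0" using U i0 by (intro bexI[of _ "(i0,v)"]) (auto simp: c_def I_def)
      ultimately show ?thesis using G_dep_iff[OF finI injg] PhiI by auto
    next
      assume "(\<Inter>i<r. linaff (P i)) \<noteq> {0}"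
      moreover have "0 \<in> (\<Inter>i<r. linaff (P i))"
        unfolding linaff_def by (auto intro!: exI[of _ "{}"])
      ultimately obtain u where u: "u \<noteq> 0" "\<And>i. i < r \<Longrightarrow> u \<in> linaff (P i)" by blast
      have "\<forall>i. \<exists>\<beta>. i < r \<longrightarrow> sum \<beta> (P i) = 0 \<and> (\<Sum>p\<in>P i. \<beta> p *\<^sub>R p) = u"
        using linI u(2) by blast
      then obtain B where B: "\<And>i. i < r \<Longrightarrow> sum (B i) (P i) = 0 \<and> (\<Sum>p\<in>P i. B i p *\<^sub>R p) = u"
        by metis
      define c where "c = (\<lambda>(i,p). B i p)"
      have VNc: "V c i None = 0" if "i < r" for i
        using B[OF that] by (simp add: VN c_def)
      have VSc: "V c i (Some a) = u $ a" if "i < r" for i a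
        using B[OF that] by (simp add: VS c_def)
      have "V c i j = V c 0 j" if "i < r" for i j
        using that r0 by (cases j) (simp_all add: VNc VSc)
      then have "(\<Sum>x\<in>I. c x *\<^sub>R g x) = 0" using E by blast
      moreover have "sum c I = 0" using sumI[of c] VNc by simp
      moreover have "\<exists>x\<in>I. c x \<noteq> 0"
      proof (rule ccontr)
        assume "\<not> ?thesis"
        then have "\<forall>p\<in>P 0. B 0 p = 0" using r0 by (auto simp: I_def c_def)
        then have "(\<Sum>p\<in>P 0. B 0 p *\<^sub>R p) = 0" by simp
        then show False using B[OF r0] u(1) by simp
      qed
      ultimately show ?thesis using G_dep_iff[OF finI injg] PhiI by auto
    qed
  qed
  show ?thesis using part1 part2 by blast
qed
end
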